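(* Let $q$ be a prime power and let $n,k$ be integers with $5\le k$ and $k\le n-2\le q-2$. Let $\alpha_1,\dots,\alpha_n\in\mathbb{F}_q$ be pairwise distinct, let $G_{k-1,k-2}$ be the $k\times n$ matrix whose rows are $(\alpha_1^{e},\dots,\alpha_n^{e})$ for $e=0,1,\dots,k-3,k,k+1$, let $\mathbf{v}=(v_1,\dots,v_n)\in(\mathbb{F}_q^* )^n$, and let $C_{\mathbf v}$ be the linear code generated by $G_{k-1,k-2}\cdot\mathrm{diag}(v_1,\dots,v_n)$. Let $u_i=\prod_{j\ne i}(\alpha_i-\alpha_j)^{-1}$ for $1\le i\le n$ and $S_t=S_t(\alpha_1,\dots,\alpha_n)$. Then $C_{\mathbf v}$ is self-orthogonal if and only if there exists a polynomial $f(x)=f_0+f_1x+\dots+f_{n-2k}x^{n-2k}\in\mathbb{F}_q[x]$ such that (1) $v_i^2=u_if(\alpha_i)$ for all $1\le i\le n$; (2) $f_{n-2k-1}+f_{n-2k}S_1=0$; (3) $f_{n-2k-2}+f_{n-2k-1}S_1+f_{n-2k}S_2=0$; (4) $f_{n-2k-3}+f_{n-2k-2}S_1+f_{n-2k-1}S_2+f_{n-2k}S_3=0$, where $f_j=0$ for $j<0$.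
   Context: Convention: $0^0=1$. $S_t(x_1,\dots,x_m)=\sum_{t_1+\dots+t_m=t,\ t_i\ge0}x_1^{t_1}\cdots x_m^{t_m}$ is the complete homogeneous symmetric polynomial of degree $t$ ($S_0=1$). A linear code $C$ is self-orthogonal if $C\subseteq C^\perp$, where $C^\perp$ is the dual with respect to the Euclidean inner product $\langle x,y\rangle=\sum_i x_iy_i$. *)

theory Defs
  imports "HOL-Computational_Algebra.Polynomial" "HOL-Library.FuncSet" "HOL-Library.Cardinality"
begin

text \<open>Vectors of length n over a field are functions nat => 'a, coordinates 0..n-1,
  required to vanish outside {0..<n}.\<close>

definition row_span :: "nat \<Rightarrow> nat \<Rightarrow> (nat \<Rightarrow> nat \<Rightarrow> 'a::field) \<Rightarrow> (nat \<Rightarrow> 'a) set" where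
  "row_span m n G = {c. \<exists>l :: nat \<Rightarrow> 'a. c = (\<lambda>i. if i < n then (\<Sum>r<m. l r * G r i) else 0)}"

definition dual_code :: "nat \<Rightarrow> (nat \<Rightarrow> 'a::field) set \<Rightarrow> (nat \<Rightarrow> 'a) set" where
  "dual_code n C = {y. (\<forall>i\<ge>n. y i = 0) \<and> (\<forall>c\<in>C. (\<Sum>i<n. c i * y i) = 0)}"

definition self_orthogonal :: "nat \<Rightarrow> (nat \<Rightarrow> 'a::field) set \<Rightarrow> bool" where
  "self_orthogonal n C \<longleftrightarrow> C \<subseteq> dual_code n C"

definition gen_exp :: "nat \<Rightarrow> nat \<Rightarrow> nat" where
  "gen_exp k r = (if r < k - 2 then r else r + 2)"

definition gen_mat :: "nat \<Rightarrow> (nat \<Rightarrow> 'a::field) \<Rightarrow> (nat \<Rightarrow> 'a) \<Rightarrow> nat \<Rightarrow> nat \<Rightarrow> 'a" where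
  "gen_mat k \<alpha> v r i = \<alpha> i ^ gen_exp k r * v i"

definition hsym :: "nat \<Rightarrow> (nat \<Rightarrow> 'a::comm_semiring_1) \<Rightarrow> nat \<Rightarrow> 'a" where
  "hsym n \<alpha> t = (\<Sum>ts\<in>{ts \<in> {0..<n} \<rightarrow>\<^sub>E {..t}. (\<Sum>i<n. ts i) = t}. \<Prod>i<n. \<alpha> i ^ ts i)"

definition u_coef :: "nat \<Rightarrow> (nat \<Rightarrow> 'a::field) \<Rightarrow> nat \<Rightarrow> 'a" where
  "u_coef n \<alpha> i = (\<Prod>j\<in>{0..<n} - {i}. inverse (\<alpha> i - \<alpha> j))"

definition icoeff :: "'a::zero poly \<Rightarrow> int \<Rightarrow> 'a" where
  "icoeff f j = (if j < 0 then 0 else coeff f (nat j))"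

end

theory Submission
  imports Defs
begin


definition uB :: "(nat \<Rightarrow> 'a::field) \<Rightarrow> nat set \<Rightarrow> nat \<Rightarrow> 'a" where
  "uB \<alpha> B i = (\<Prod>j\<in>B - {i}. inverse (\<alpha> i - \<alpha> j))"

definition DD :: "(nat \<Rightarrow> 'a::field) \<Rightarrow> nat set \<Rightarrow> nat \<Rightarrow> 'a" where
  "DD \<alpha> B m = (\<Sum>i\<in>B. \<alpha> i ^ m * uB \<alpha> B i)"

lemma uB_remove:
  assumes "finite B" "a \<in> B" "i \<in> B" "i \<noteq> a"
  shows "uB \<alpha> B i = inverse (\<alpha> i - \<alpha> a) * uB \<alpha> (B - {a}) i"
proof -
  have "B - {i} = insert a (B - {a} - {i})" using assms by auto
  then show ?thesis unfolding uB_def using assms by simp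
qed

lemma DD_rec:
  assumes "finite B" "inj_on \<alpha> B" "a \<in> B"
  shows "DD \<alpha> B (Suc m) = \<alpha> a * DD \<alpha> B m + DD \<alpha> (B - {a}) m"
proof -
  have "DD \<alpha> B (Suc m) - \<alpha> a * DD \<alpha> B m = (\<Sum>i\<in>B. (\<alpha> i - \<alpha> a) * \<alpha> i ^ m * uB \<alpha> B i)"
    unfolding DD_def by (simp add: sum_distrib_left sum_subtractf[symmetric] algebra_simps)
  also have "\<dots> = (\<Sum>i\<in>B - {a}. (\<alpha> i - \<alpha> a) * \<alpha> i ^ m * uB \<alpha> B i)"
    using assms by (intro sum.mono_neutral_right) auto
  also have "\<dots> = (\<Sum>i\<in>B - {a}. \<alpha> i ^ m * uB \<alpha> (B - {a}) i)"
  proof (rule sum.cong)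
    fix i assume i: "i \<in> B - {a}"
    then have ne: "\<alpha> i - \<alpha> a \<noteq> 0" using assms inj_on_eq_iff[OF assms(2)] by auto
    have "(\<alpha> i - \<alpha> a) * uB \<alpha> B i = uB \<alpha> (B - {a}) i"
      using uB_remove[OF assms(1,3), of i \<alpha>] i ne by simp
    then show "(\<alpha> i - \<alpha> a) * \<alpha> i ^ m * uB \<alpha> B i = \<alpha> i ^ m * uB \<alpha> (B - {a}) i"
      by (metis mult.commute mult.left_commute)
  qed simp
  finally show ?thesis unfolding DD_def[of _ "B - {a}"] by (simp add: algebra_simps)
qed

lemma DD_base:
  assumes "finite B" "inj_on \<alpha> B" "card B = Suc n" "m \<le> n"
  shows "DD \<alpha> B m = (if m = n then 1 else 0)"
  using assms
proof (induction n arbitrary: B m)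
  case 0
  then obtain a where B: "B = {a}" by (metis card_1_singletonE One_nat_def)
  with 0 show ?case by (simp add: DD_def uB_def)
next
  case (Suc n)
  from Suc.prems obtain a b where ab: "a \<in> B" "b \<in> B" "a \<noteq> b"
    by (metis One_nat_def card_le_Suc0_iff_eq le_add1 not_less_eq_eq plus_1_eq_Suc)
  have ca: "card (B - {a}) = Suc n" "card (B - {b}) = Suc n" using Suc.prems ab by auto
  have ia: "inj_on \<alpha> (B - {a})" "inj_on \<alpha> (B - {b})"
    using Suc.prems(2) by (auto intro: inj_on_subset)
  have IHm: "\<And>m. m \<le> n \<Longrightarrow> DD \<alpha> (B - {a}) m = (if m = n then 1 else 0)"
    using Suc.IH ca ia Suc.prems by auto
  have recA: "\<And>m. DD \<alpha> B (Suc m) = \<alpha> a * DD \<alpha> B m + DD \<alpha> (B - {a}) m"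
    using DD_rec[OF Suc.prems(1,2) ab(1)] by simp
  have IHa: "DD \<alpha> (B - {a}) 0 = (if 0 = n then 1 else 0)"
    using Suc.IH[of "B - {a}" 0] ca Suc.prems ia by auto
  have IHb: "DD \<alpha> (B - {b}) 0 = (if 0 = n then 1 else 0)"
    using Suc.IH[of "B - {b}" 0] ca Suc.prems ia by auto
  have "\<alpha> a * DD \<alpha> B 0 + DD \<alpha> (B - {a}) 0 = \<alpha> b * DD \<alpha> B 0 + DD \<alpha> (B - {b}) 0"
    using DD_rec[OF Suc.prems(1,2) ab(1), of 0] DD_rec[OF Suc.prems(1,2) ab(2), of 0] by simp
  then have "(\<alpha> a - \<alpha> b) * DD \<alpha> B 0 = 0" using IHa IHb by (simp add: algebra_simps)
  moreover have "\<alpha> a \<noteq> \<alpha> b" using ab Suc.prems(2) inj_on_eq_iff by metis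
  ultimately have D0: "DD \<alpha> B 0 = 0" by simp
  have "\<forall>m. m \<le> Suc n \<longrightarrow> DD \<alpha> B m = (if m = Suc n then 1 else 0)"
  proof
    fix m show "m \<le> Suc n \<longrightarrow> DD \<alpha> B m = (if m = Suc n then 1 else 0)"
    proof (induction m)
      case 0 then show ?case using D0 by simp
    next
      case (Suc m)
      show ?case
      proof
        assume m: "Suc m \<le> Suc n"
        have "DD \<alpha> (B - {a}) m = (if m = n then 1 else 0)"
          using IHm m by simp
        then show "DD \<alpha> B (Suc m) = (if Suc m = Suc n then 1 else 0)"
          using recA[of m] Suc.IH m by simp
      qed
    qed
  qed
  then show ?case using Suc.prems by blast
qed


fun Hn :: "(nat \<Rightarrow> 'a::comm_semiring_1) \<Rightarrow> nat \<Rightarrow> nat \<Rightarrow> 'a" where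
  "Hn \<alpha> 0 t = (if t = 0 then 1 else 0)"
| "Hn \<alpha> (Suc n) t = (\<Sum>s\<le>t. \<alpha> n ^ s * Hn \<alpha> n (t - s))"

lemma Hn_0: "Hn \<alpha> n 0 = 1"
  by (induction n) auto

lemma Hn_Suc_Suc: "Hn \<alpha> (Suc n) (Suc t) = Hn \<alpha> n (Suc t) + \<alpha> n * Hn \<alpha> (Suc n) t"
  by (simp only: Hn.simps sum.atMost_Suc_shift) (simp add: sum_distrib_left mult.assoc)

lemma Hn_1: "Hn \<alpha> (Suc 0) t = \<alpha> 0 ^ t"
  by (induction t) (auto simp: Hn_Suc_Suc[of _ 0] Hn_0 simp del: Hn.simps(2))

lemma DD_Hn:
  assumes "inj_on \<alpha> {0..<Suc n}"
  shows "DD \<alpha> {0..<Suc n} (n + t) = Hn \<alpha> (Suc n) t"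
  using assms
proof (induction n arbitrary: t)
  case 0
  then show ?case by (simp add: DD_def uB_def Hn_1 del: Hn.simps(2))
next
  case (Suc n)
  have inj: "inj_on \<alpha> {0..<Suc n}" using Suc.prems by (auto intro: inj_on_subset)
  have inj2: "inj_on \<alpha> {0..<Suc (Suc n)}" using Suc.prems .
  have oIH: "\<And>t. DD \<alpha> {0..<Suc n} (n + t) = Hn \<alpha> (Suc n) t" using Suc.IH inj by blast
  show ?case
  proof (induction t)
    case 0
    have "DD \<alpha> {0..<Suc (Suc n)} (Suc n) = 1"
      using DD_base[OF _ inj2, of "Suc n" "Suc n"] by simp
    then show ?case by (simp add: Hn_0 del: Hn.simps(2))
  next
    case (Suc t)
    have "DD \<alpha> {0..<Suc (Suc n)} (Suc n + Suc t) = \<alpha> (Suc n) * DD \<alpha> {0..<Suc (Suc n)} (Suc n + t)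
       + DD \<alpha> ({0..<Suc (Suc n)} - {Suc n}) (Suc n + t)"
      using DD_rec[of "{0..<Suc (Suc n)}" \<alpha> "Suc n" "Suc n + t"] inj2 by simp
    also have "{0..<Suc (Suc n)} - {Suc n} = {0..<Suc n}" by auto
    also have "DD \<alpha> {0..<Suc n} (Suc n + t) = Hn \<alpha> (Suc n) (Suc t)"
      using oIH[of "Suc t"] by simp
    finally show ?case using Suc.IH Hn_Suc_Suc[of \<alpha> "Suc n" t] by (simp add: algebra_simps del: Hn.simps(2))
  qed
qed


lemma hsym_set_eq:
  fixes t T :: nat
  assumes "t \<le> T"
  shows "{ts \<in> {0..<n} \<rightarrow>\<^sub>E {..T}. (\<Sum>i<n. ts i) = t} = {ts::nat\<Rightarrow>nat \<in> {0..<n} \<rightarrow>\<^sub>E {..t}. (\<Sum>i<n. ts i) = t}"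
proof (intro equalityI subsetI)
  fix ts assume ts: "ts \<in> {ts \<in> {0..<n} \<rightarrow>\<^sub>E {..T}. (\<Sum>i<n. ts i) = t}"
  have "\<And>i. i < n \<Longrightarrow> ts i \<le> t"
    using ts member_le_sum[of _ "{..<n}" ts] by fastforce
  then show "ts \<in> {ts \<in> {0..<n} \<rightarrow>\<^sub>E {..t}. (\<Sum>i<n. ts i) = t}" using ts by (auto simp: PiE_iff)
next
  fix ts assume "ts \<in> {ts \<in> {0..<n} \<rightarrow>\<^sub>E {..t}. (\<Sum>i<n. ts i) = t}"
  then show "ts \<in> {ts \<in> {0..<n} \<rightarrow>\<^sub>E {..T}. (\<Sum>i<n. ts i) = t}" using assms by (auto simp: PiE_iff)
qed

lemma upd_in_A:
  fixes b :: "nat \<Rightarrow> nat"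
  assumes "b \<in> {0..<n} \<rightarrow>\<^sub>E {..t}" "(\<Sum>i<n. b i) = t - s" "s \<le> t"
  shows "b(n := s) \<in> {0..<Suc n} \<rightarrow>\<^sub>E {..t}" "(\<Sum>i<Suc n. (b(n := s)) i) = t"
proof -
  have b1: "\<And>i. i < n \<Longrightarrow> b i \<le> t" using assms(1) by (auto simp: PiE_iff)
  have b2: "\<And>i. i \<ge> n \<Longrightarrow> b i = undefined" using assms(1) by (auto simp: PiE_iff extensional_def)
  show "b(n := s) \<in> {0..<Suc n} \<rightarrow>\<^sub>E {..t}"
    unfolding PiE_iff extensional_def
  proof (intro conjI ballI allI impI CollectI)
    fix i assume i: "i \<in> {0..<Suc n}"
    show "(b(n := s)) i \<in> {..t}"
    proof (cases "i = n")
      case True then show ?thesis using assms(3) by simp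
    next
      case False then show ?thesis using i b1 by simp
    qed
  next
    fix i assume i: "i \<notin> {0..<Suc n}"
    then have "i \<noteq> n" "i \<ge> n" by auto
    then show "(b(n := s)) i = undefined" using b2 by simp
  qed
  have "(\<Sum>i<n. (b(n := s)) i) = (\<Sum>i<n. b i)" by (intro sum.cong) auto
  then show "(\<Sum>i<Suc n. (b(n := s)) i) = t" using assms(2,3) by simp
qed

lemma restr_in_B:
  fixes a :: "nat \<Rightarrow> nat"
  assumes "a \<in> {0..<Suc n} \<rightarrow>\<^sub>E {..t}" "(\<Sum>i<Suc n. a i) = t" "a n = s"
  shows "a(n := undefined) \<in> {0..<n} \<rightarrow>\<^sub>E {..t}" "(\<Sum>i<n. (a(n := undefined)) i) = t - s"
proof -
  have a1: "\<And>i. i < Suc n \<Longrightarrow> a i \<le> t" using assms(1) by (auto simp: PiE_iff)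
  have a2: "\<And>i. i \<ge> Suc n \<Longrightarrow> a i = undefined" using assms(1) by (auto simp: PiE_iff extensional_def)
  show "a(n := undefined) \<in> {0..<n} \<rightarrow>\<^sub>E {..t}"
    unfolding PiE_iff extensional_def
  proof (intro conjI ballI allI impI CollectI)
    fix i assume i: "i \<in> {0..<n}"
    then show "(a(n := undefined)) i \<in> {..t}" using a1 by simp
  next
    fix i assume i: "i \<notin> {0..<n}"
    show "(a(n := undefined)) i = undefined"
    proof (cases "i = n")
      case False then show ?thesis using i a2 by simp
    qed simp
  qed
  have "(\<Sum>i<n. (a(n := undefined)) i) = (\<Sum>i<n. a i)" by (intro sum.cong) auto
  then show "(\<Sum>i<n. (a(n := undefined)) i) = t - s" using assms(2,3) by simp
qed

lemma upd_undef:
  fixes b :: "nat \<Rightarrow> nat"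
  assumes "b \<in> {0..<n} \<rightarrow>\<^sub>E T"
  shows "b(n := s, n := undefined) = b"
proof -
  have "b n = undefined" using assms by (intro extensional_arb[of b "{0..<n}"]) (auto simp: PiE_iff)
  then show ?thesis by (simp add: fun_eq_iff)
qed
lemma hsym_Hn: "hsym n \<alpha> t = Hn \<alpha> n t"
proof (induction n arbitrary: t)
  case 0
  then show ?case by (simp add: hsym_def PiE_empty_domain)
next
  case (Suc n)
  define A where "A = {ts \<in> {0..<Suc n} \<rightarrow>\<^sub>E {..t}. (\<Sum>i<Suc n. ts i) = t}"
  define F where "F = (\<lambda>ts. \<Prod>i<Suc n. \<alpha> i ^ ts i)"
  have finA: "finite A" unfolding A_def
    by (rule finite_subset[of _ "{0..<Suc n} \<rightarrow>\<^sub>E {..t}"]) (auto intro: finite_PiE)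
  have "hsym (Suc n) \<alpha> t = sum F A" unfolding hsym_def A_def F_def by simp
  also have "\<dots> = (\<Sum>s\<le>t. \<Sum>ts\<in>{ts \<in> A. ts n = s}. F ts)"
    by (rule sum.group[symmetric, OF finA]) (auto simp: A_def PiE_iff)
  also have "\<dots> = (\<Sum>s\<le>t. \<alpha> n ^ s * Hn \<alpha> n (t - s))"
  proof (rule sum.cong[OF refl])
    fix s assume s: "s \<in> {..t}"
    define Bs where "Bs = {g \<in> {0..<n} \<rightarrow>\<^sub>E {..t}. (\<Sum>i<n. g i) = t - s}"
    have "(\<Sum>ts\<in>{ts \<in> A. ts n = s}. F ts) = (\<Sum>g\<in>Bs. F (g(n := s)))"
    proof (rule sum.reindex_bij_witness[where j = "\<lambda>ts. ts(n := undefined)" and i = "\<lambda>g. g(n := s)"])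
      fix a assume "a \<in> {ts \<in> A. ts n = s}"
      then show "a(n := undefined, n := s) = a" by auto
    next
      fix a assume a: "a \<in> {ts \<in> A. ts n = s}"
      then have "a \<in> {0..<Suc n} \<rightarrow>\<^sub>E {..t}" "(\<Sum>i<Suc n. a i) = t" "a n = s"
        unfolding A_def by auto
      from restr_in_B[OF this] show "a(n := undefined) \<in> Bs" unfolding Bs_def by blast
    next
      fix b assume "b \<in> Bs"
      then show "b(n := s, n := undefined) = b" unfolding Bs_def using upd_undef by blast
    next
      fix b assume "b \<in> Bs"
      then have "b \<in> {0..<n} \<rightarrow>\<^sub>E {..t}" "(\<Sum>i<n. b i) = t - s" "s \<le> t"
        unfolding Bs_def using s by auto
      from upd_in_A[OF this] show "b(n := s) \<in> {ts \<in> A. ts n = s}" unfolding A_def by simp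
    next
      fix a assume "a \<in> {ts \<in> A. ts n = s}"
      then have "a(n := undefined, n := s) = a" by auto
      then show "F (a(n := undefined, n := s)) = F a" by simp
    qed
    also have "\<dots> = (\<Sum>g\<in>Bs. \<alpha> n ^ s * (\<Prod>i<n. \<alpha> i ^ g i))"
      unfolding F_def by (intro sum.cong refl) (simp add: mult.commute)
    also have "\<dots> = \<alpha> n ^ s * hsym n \<alpha> (t - s)"
    proof -
      have "Bs = {g \<in> {0..<n} \<rightarrow>\<^sub>E {..t - s}. (\<Sum>i<n. g i) = t - s}"
        unfolding Bs_def by (rule hsym_set_eq) simp
      then show ?thesis unfolding hsym_def by (simp only: sum_distrib_left)
    qed
    finally show "(\<Sum>ts\<in>{ts \<in> A. ts n = s}. F ts) = \<alpha> n ^ s * Hn \<alpha> n (t - s)" using Suc.IH by simp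
  qed
  finally show ?case by simp
qed



lemma exps:
  assumes k: "5 \<le> k"
  shows "(\<forall>r<k. \<forall>s<k. Q (gen_exp k r + gen_exp k s)) \<longleftrightarrow>
         ((\<forall>m\<le>2*k-2. Q m) \<and> Q (2*k) \<and> Q (2*k+1) \<and> Q (2*k+2))"
proof
  assume H: "\<forall>r<k. \<forall>s<k. Q (gen_exp k r + gen_exp k s)"
  have e1: "\<And>r. r < k - 2 \<Longrightarrow> gen_exp k r = r" by (simp add: gen_exp_def)
  have e2: "gen_exp k (k-2) = k" "gen_exp k (k-1) = k+1" using k by (auto simp: gen_exp_def)
  have "Q m" if m: "m \<le> 2*k-2" for m
  proof -
    consider "m \<le> 2*k-6" | "2*k-6 < m" "m \<le> 2*k-3" | "m = 2*k-2" using m k by linarith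
    then show ?thesis
    proof cases
      case 1
      define r where "r = min m (k-3)"
      have "r < k - 2" "m - r < k - 2" using 1 k by (auto simp: r_def)
      then have "Q (gen_exp k r + gen_exp k (m - r))" using H k by auto
      then show ?thesis using e1 \<open>r < k - 2\<close> \<open>m - r < k - 2\<close> by (simp add: r_def)
    next
      case 2
      have "m - k < k - 2" using 2 k by auto
      then have "Q (gen_exp k (k-2) + gen_exp k (m - k))" using H k by auto
      then show ?thesis using e1 \<open>m - k < k - 2\<close> e2 2 k by simp
    next
      case 3
      have "k - 3 < k - 2" using k by auto
      then have "Q (gen_exp k (k-1) + gen_exp k (k-3))" using H k by auto
      then show ?thesis using e1[of "k-3"] e2 3 k by (simp add: mult_2)
    qed
  qed
  moreover have "Q (2*k)" using H[rule_format, of "k-2" "k-2"] e2 k by (simp add: mult_2)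
  moreover have "Q (2*k+1)" using H[rule_format, of "k-2" "k-1"] e2 k by (simp add: mult_2)
  moreover have "Q (2*k+2)" using H[rule_format, of "k-1" "k-1"] e2 k by (simp add: mult_2)
  ultimately show "(\<forall>m\<le>2*k-2. Q m) \<and> Q (2*k) \<and> Q (2*k+1) \<and> Q (2*k+2)" by blast
next
  assume H: "(\<forall>m\<le>2*k-2. Q m) \<and> Q (2*k) \<and> Q (2*k+1) \<and> Q (2*k+2)"
  show "\<forall>r<k. \<forall>s<k. Q (gen_exp k r + gen_exp k s)"
  proof (intro allI impI)
    fix r s assume rs: "r < k" "s < k"
    consider "r < k - 2" "s < k - 2" | "r < k - 2" "s \<ge> k - 2" | "r \<ge> k - 2" "s < k - 2"
      | "r \<ge> k - 2" "s \<ge> k - 2" by linarith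
    then show "Q (gen_exp k r + gen_exp k s)"
    proof cases
      case 1 then show ?thesis using H rs by (auto simp: gen_exp_def)
    next
      case 2 then show ?thesis using H rs by (auto simp: gen_exp_def)
    next
      case 3 then show ?thesis using H rs by (auto simp: gen_exp_def)
    next
      case 4
      then have "r = k-2 \<or> r = k-1" "s = k-2 \<or> s = k-1" using rs by auto
      then have "gen_exp k r + gen_exp k s \<in> {2*k, 2*k+1, 2*k+2}" using k by (auto simp: gen_exp_def)
      then show ?thesis using H by auto
    qed
  qed
qed

lemma so_iff:
  fixes G :: "nat \<Rightarrow> nat \<Rightarrow> 'a::field"
  shows "self_orthogonal n (row_span k n G) \<longleftrightarrow> (\<forall>r<k. \<forall>s<k. (\<Sum>i<n. G r i * G s i) = 0)"
proof
  assume H: "self_orthogonal n (row_span k n G)"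
  define row where "row r = (\<lambda>i. if i < n then G r i else 0)" for r
  have inrow: "row r \<in> row_span k n G" if "r < k" for r
  proof -
    have d: "(\<Sum>r'<k. (if r' = r then 1 else 0) * G r' i) = G r i" for i
    proof -
      have "(\<Sum>r'<k. (if r' = r then 1 else 0) * G r' i) = (\<Sum>r'<k. if r' = r then G r' i else 0)"
        by (rule sum.cong) auto
      also have "\<dots> = G r i" using that by (simp add: sum.delta')
      finally show ?thesis .
    qed
    have "row r = (\<lambda>i. if i < n then (\<Sum>r'<k. (\<lambda>r'. if r' = r then 1 else 0) r' * G r' i) else 0)"
      using d by (auto simp: row_def fun_eq_iff)
    then show ?thesis unfolding row_span_def by (intro CollectI exI)
  qed
  show "\<forall>r<k. \<forall>s<k. (\<Sum>i<n. G r i * G s i) = 0"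
  proof (intro allI impI)
    fix r s assume "r < k" "s < k"
    then have "row s \<in> dual_code n (row_span k n G)" using H inrow unfolding self_orthogonal_def by blast
    then have "(\<Sum>i<n. row r i * row s i) = 0" using inrow[OF \<open>r < k\<close>] unfolding dual_code_def by blast
    then show "(\<Sum>i<n. G r i * G s i) = 0" by (simp add: row_def)
  qed
next
  assume H: "\<forall>r<k. \<forall>s<k. (\<Sum>i<n. G r i * G s i) = 0"
  show "self_orthogonal n (row_span k n G)"
    unfolding self_orthogonal_def
  proof
    fix y assume "y \<in> row_span k n G"
    then obtain l where y: "y = (\<lambda>i. if i < n then (\<Sum>s<k. l s * G s i) else 0)"
      unfolding row_span_def by blast
    show "y \<in> dual_code n (row_span k n G)" unfolding dual_code_def
    proof (intro CollectI conjI allI impI ballI)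
      fix i assume "n \<le> i" then show "y i = 0" using y by simp
    next
      fix c assume "c \<in> row_span k n G"
      then obtain l' where c: "c = (\<lambda>i. if i < n then (\<Sum>r<k. l' r * G r i) else 0)"
        unfolding row_span_def by blast
      have "(\<Sum>i<n. c i * y i) = (\<Sum>i<n. (\<Sum>r<k. l' r * G r i) * (\<Sum>s<k. l s * G s i))"
        using c y by simp
      also have "\<dots> = (\<Sum>i<n. \<Sum>r<k. \<Sum>s<k. (l' r * l s) * (G r i * G s i))"
        by (simp add: sum_product algebra_simps)
      also have "\<dots> = (\<Sum>r<k. \<Sum>s<k. \<Sum>i<n. (l' r * l s) * (G r i * G s i))"
        by (simp add: sum.swap[of _ "{..<n}"])
      also have "\<dots> = (\<Sum>r<k. \<Sum>s<k. (l' r * l s) * (\<Sum>i<n. G r i * G s i))"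
        by (simp add: sum_distrib_left)
      also have "\<dots> = 0" using H by simp
      finally show "(\<Sum>i<n. c i * y i) = 0" .
    qed
  qed
qed



lemma poly_sum_lt:
  fixes g :: "'a::field poly"
  assumes "\<forall>j\<ge>L. coeff g j = 0"
  shows "poly g x = (\<Sum>j<L. coeff g j * x ^ j)"
proof (cases "g = 0")
  case True then show ?thesis by simp
next
  case False
  then have "coeff g (degree g) \<noteq> 0" by simp
  then have dL: "degree g < L" using assms by (meson not_le)
  have "poly g x = (\<Sum>j\<le>degree g. coeff g j * x ^ j)" by (rule poly_altdef)
  also have "\<dots> = (\<Sum>j<L. coeff g j * x ^ j)"
    by (rule sum.mono_neutral_left) (use dL assms in \<open>auto simp: coeff_eq_0\<close>)
  finally show ?thesis .
qed

definition cc :: "(nat \<Rightarrow> 'a::field) \<Rightarrow> nat \<Rightarrow> nat \<Rightarrow> 'a" where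
  "cc \<alpha> n m = (\<Sum>i<n. u_coef n \<alpha> i * \<alpha> i ^ m)"

lemma cc_DD: "cc \<alpha> n m = DD \<alpha> {0..<n} m"
  unfolding cc_def DD_def u_coef_def uB_def by (simp add: atLeast0LessThan mult.commute)

lemma cc_low:
  assumes "inj_on \<alpha> {0..<n}" "1 \<le> n" "m \<le> n - 1"
  shows "cc \<alpha> n m = (if m = n - 1 then 1 else 0)"
  unfolding cc_DD using DD_base[of "{0..<n}" \<alpha> "n - 1" m] assms by simp

lemma cc_high:
  assumes "inj_on \<alpha> {0..<n}" "1 \<le> n"
  shows "cc \<alpha> n (n - 1 + t) = hsym n \<alpha> t"
proof -
  obtain n' where n: "n = Suc n'" using assms(2) by (cases n) auto
  show ?thesis unfolding cc_DD hsym_Hn using DD_Hn[of \<alpha> n' t] assms n by simp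
qed

lemma wsum:
  fixes g :: "'a::field poly"
  assumes "\<forall>j\<ge>L. coeff g j = 0"
  shows "(\<Sum>i<n. u_coef n \<alpha> i * poly g (\<alpha> i) * \<alpha> i ^ m) = (\<Sum>j<L. coeff g j * cc \<alpha> n (j + m))"
proof -
  have "(\<Sum>i<n. u_coef n \<alpha> i * poly g (\<alpha> i) * \<alpha> i ^ m)
      = (\<Sum>i<n. \<Sum>j<L. coeff g j * (u_coef n \<alpha> i * \<alpha> i ^ (j + m)))"
    unfolding poly_sum_lt[OF assms]
    by (simp add: sum_distrib_left sum_distrib_right power_add algebra_simps)
  also have "\<dots> = (\<Sum>j<L. \<Sum>i<n. coeff g j * (u_coef n \<alpha> i * \<alpha> i ^ (j + m)))"
    by (rule sum.swap)
  also have "\<dots> = (\<Sum>j<L. coeff g j * cc \<alpha> n (j + m))"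
    unfolding cc_def by (simp add: sum_distrib_left)
  finally show ?thesis .
qed

lemma reidx:
  fixes f :: "'a::comm_ring_1 poly"
  shows "(\<Sum>j<N+1. coeff f j * (if j + D < N then 0 else h (j + D - N)))
       = (\<Sum>t\<le>D. icoeff f (int N - int D + int t) * h t)"
proof -
  have "(\<Sum>j<N+1. coeff f j * (if j + D < N then 0 else h (j + D - N)))
      = (\<Sum>j\<in>{j. j < N+1 \<and> N \<le> j + D}. coeff f j * h (j + D - N))"
    by (rule sum.mono_neutral_cong_right) auto
  also have "\<dots> = (\<Sum>t\<in>{t. t \<le> D \<and> D \<le> N + t}. coeff f (N + t - D) * h t)"
    by (rule sum.reindex_bij_witness[where i = "\<lambda>t. N + t - D" and j = "\<lambda>j. j + D - N"]) auto
  also have "\<dots> = (\<Sum>t\<le>D. icoeff f (int N - int D + int t) * h t)"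
  proof -
    have z: "\<forall>t\<in>{..D} - {t. t \<le> D \<and> D \<le> N + t}. icoeff f (int N - int D + int t) * h t = 0"
      by (auto simp: icoeff_def)
    have e: "coeff f (N + t - D) * h t = icoeff f (int N - int D + int t) * h t"
      if t: "t \<in> {t. t \<le> D \<and> D \<le> N + t}" for t
    proof -
      have "nat (int N - int D + int t) = N + t - D" using t by auto
      then show ?thesis using t by (auto simp: icoeff_def)
    qed
    show ?thesis by (rule sum.mono_neutral_cong_left[OF _ _ z e]) auto
  qed
  finally show ?thesis .
qed

lemma tri:
  fixes c a :: "nat \<Rightarrow> 'a::field"
  assumes n: "1 \<le> n" and c0: "\<forall>t<n-1. c t = 0" and c1: "c (n-1) = 1"
    and S: "\<forall>d\<le>M. (\<Sum>j<n. a j * c (j + d)) = 0"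
  shows "d \<le> M \<Longrightarrow> d < n \<Longrightarrow> a (n - 1 - d) = 0"
proof (induction d rule: less_induct)
  case (less d)
  have "0 = (\<Sum>j<n. a j * c (j + d))" using S less.prems by simp
  also have "\<dots> = a (n-1-d) * c (n - 1 - d + d) + (\<Sum>j\<in>{..<n} - {n-1-d}. a j * c (j + d))"
    using less.prems by (subst sum.remove[of _ "n-1-d"]) auto
  also have "(\<Sum>j\<in>{..<n} - {n-1-d}. a j * c (j + d)) = 0"
  proof (rule sum.neutral, rule ballI)
    fix j assume j: "j \<in> {..<n} - {n-1-d}"
    show "a j * c (j + d) = 0"
    proof (cases "j < n - 1 - d")
      case True then show ?thesis using c0 by simp
    next
      case False
      then have "n - 1 - j < d" "j = n - 1 - (n - 1 - j)" using j by auto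
      then have "a j = 0" using less.IH[of "n - 1 - j"] less.prems by auto
      then show ?thesis by simp
    qed
  qed
  finally show ?case using c1 less.prems by simp
qed

definition interp :: "(nat \<Rightarrow> 'a::field) \<Rightarrow> (nat \<Rightarrow> 'a) \<Rightarrow> nat \<Rightarrow> 'a poly" where
  "interp \<alpha> w n = (\<Sum>i<n. smult (w i) (\<Prod>j\<in>{0..<n}-{i}. [:- \<alpha> j, 1:]))"

lemma interp_eval:
  assumes "l < n"
  shows "poly (interp \<alpha> w n) (\<alpha> l) = w l * (\<Prod>j\<in>{0..<n}-{l}. (\<alpha> l - \<alpha> j))"
proof -
  have "poly (interp \<alpha> w n) (\<alpha> l) = (\<Sum>i<n. w i * (\<Prod>j\<in>{0..<n}-{i}. (\<alpha> l - \<alpha> j)))"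
    unfolding interp_def by (simp add: poly_sum poly_prod)
  also have "\<dots> = w l * (\<Prod>j\<in>{0..<n}-{l}. (\<alpha> l - \<alpha> j))
      + (\<Sum>i\<in>{..<n}-{l}. w i * (\<Prod>j\<in>{0..<n}-{i}. (\<alpha> l - \<alpha> j)))"
    using assms by (subst sum.remove[of _ l]) auto
  also have "(\<Sum>i\<in>{..<n}-{l}. w i * (\<Prod>j\<in>{0..<n}-{i}. (\<alpha> l - \<alpha> j))) = 0"
  proof (rule sum.neutral, rule ballI)
    fix i assume "i \<in> {..<n}-{l}"
    then have "l \<in> {0..<n}-{i}" using assms by auto
    then have "(\<Prod>j\<in>{0..<n}-{i}. (\<alpha> l - \<alpha> j)) = 0" by (intro prod_zero) auto
    then show "w i * (\<Prod>j\<in>{0..<n}-{i}. (\<alpha> l - \<alpha> j)) = 0" by simp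
  qed
  finally show ?thesis by simp
qed

lemma interp_coeff:
  assumes "n \<le> j"
  shows "coeff (interp \<alpha> w n) j = 0"
proof -
  have "coeff (\<Prod>i\<in>{0..<n}-{i'}. [:- \<alpha> i, 1:]) j = 0" if "i' < n" for i'
  proof (rule coeff_eq_0)
    have "degree (\<Prod>i\<in>{0..<n}-{i'}. [:- \<alpha> i, 1:]) \<le> (\<Sum>i\<in>{0..<n}-{i'}. degree [:- \<alpha> i, 1:])"
      using degree_prod_sum_le[of "{0..<n}-{i'}" "\<lambda>i. [:- \<alpha> i, 1:]"] by (simp add: o_def)
    also have "\<dots> = card ({0..<n}-{i'})" by simp
    also have "\<dots> < j" using that assms by simp
    finally show "degree (\<Prod>i\<in>{0..<n}-{i'}. [:- \<alpha> i, 1:]) < j" .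
  qed
  then show ?thesis unfolding interp_def by (simp add: coeff_sum)
qed

lemma u_interp:
  assumes "inj_on \<alpha> {0..<n}" "l < n"
  shows "u_coef n \<alpha> l * poly (interp \<alpha> w n) (\<alpha> l) = w l"
proof -
  have "u_coef n \<alpha> l * (\<Prod>j\<in>{0..<n}-{l}. (\<alpha> l - \<alpha> j)) = (\<Prod>j\<in>{0..<n}-{l}. inverse (\<alpha> l - \<alpha> j) * (\<alpha> l - \<alpha> j))"
    unfolding u_coef_def by (simp add: prod.distrib)
  also have "\<dots> = 1"
  proof (rule prod.neutral, rule ballI)
    fix j assume j: "j \<in> {0..<n}-{l}"
    then have "\<alpha> l \<noteq> \<alpha> j" using assms inj_on_eq_iff[OF assms(1)] by auto
    then show "inverse (\<alpha> l - \<alpha> j) * (\<alpha> l - \<alpha> j) = 1" by simp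
  qed
  finally have U: "u_coef n \<alpha> l * (\<Prod>j\<in>{0..<n}-{l}. (\<alpha> l - \<alpha> j)) = 1" .
  have "u_coef n \<alpha> l * poly (interp \<alpha> w n) (\<alpha> l) = w l * (u_coef n \<alpha> l * (\<Prod>j\<in>{0..<n}-{l}. (\<alpha> l - \<alpha> j)))"
    using interp_eval[OF assms(2), of \<alpha> w] by (simp add: ac_simps)
  then show ?thesis using U by simp
qed



lemma compute:
  fixes \<alpha> :: "nat \<Rightarrow> 'a::field" and f :: "'a poly"
  assumes inj: "inj_on \<alpha> {0..<n}" and nN: "n = N + 2*k" and k: "1 \<le> k"
    and fc: "\<forall>j>N. coeff f j = 0" and w: "\<forall>i<n. w i = u_coef n \<alpha> i * poly f (\<alpha> i)"
  shows "m \<le> 2*k-2 \<Longrightarrow> (\<Sum>i<n. w i * \<alpha> i ^ m) = 0"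
    and "(\<Sum>i<n. w i * \<alpha> i ^ (2*k+d)) = (\<Sum>t\<le>Suc d. icoeff f (int N - int (Suc d) + int t) * hsym n \<alpha> t)"
proof -
  have fc': "\<forall>j\<ge>N+1. coeff f j = 0" using fc by auto
  have n1: "1 \<le> n" using nN k by simp
  have S: "(\<Sum>i<n. w i * \<alpha> i ^ m) = (\<Sum>j<N+1. coeff f j * cc \<alpha> n (j + m))" for m
  proof -
    have "(\<Sum>i<n. w i * \<alpha> i ^ m) = (\<Sum>i<n. u_coef n \<alpha> i * poly f (\<alpha> i) * \<alpha> i ^ m)"
      using w by (intro sum.cong) auto
    then show ?thesis using wsum[OF fc', of n \<alpha> m] by simp
  qed
  show "(\<Sum>i<n. w i * \<alpha> i ^ m) = 0" if m: "m \<le> 2*k-2"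
  proof -
    have "cc \<alpha> n (j + m) = 0" if j: "j < N + 1" for j
      using cc_low[OF inj n1, of "j + m"] j m nN k by simp
    then show ?thesis unfolding S by simp
  qed
  have C: "cc \<alpha> n (j + (2*k+d)) = (if j + Suc d < N then 0 else hsym n \<alpha> (j + Suc d - N))" for j
  proof (cases "j + Suc d < N")
    case True
    then show ?thesis using cc_low[OF inj n1, of "j + (2*k+d)"] nN k by simp
  next
    case False
    then have "j + (2*k+d) = n - 1 + (j + Suc d - N)" using nN k by simp
    then show ?thesis using cc_high[OF inj n1, of "j + Suc d - N"] False by simp
  qed
  show "(\<Sum>i<n. w i * \<alpha> i ^ (2*k+d)) = (\<Sum>t\<le>Suc d. icoeff f (int N - int (Suc d) + int t) * hsym n \<alpha> t)"
    unfolding S C by (rule reidx)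
qed

lemma hsym0: "hsym n \<alpha> 0 = 1"
  by (simp add: hsym_Hn Hn_0)

lemma E0: "(\<Sum>t\<le>Suc 0. icoeff f (int N - int (Suc 0) + int t) * hsym n \<alpha> t)
   = icoeff f (int N - 1) + icoeff f (int N) * hsym n \<alpha> 1"
  by (simp add: hsym0)

lemma E1: "(\<Sum>t\<le>Suc 1. icoeff f (int N - int (Suc 1) + int t) * hsym n \<alpha> t)
   = icoeff f (int N - 2) + icoeff f (int N - 1) * hsym n \<alpha> 1 + icoeff f (int N) * hsym n \<alpha> 2"
  by (simp add: hsym0 numeral_2_eq_2 algebra_simps)

lemma E2: "(\<Sum>t\<le>Suc 2. icoeff f (int N - int (Suc 2) + int t) * hsym n \<alpha> t)
   = icoeff f (int N - 3) + icoeff f (int N - 2) * hsym n \<alpha> 1 + icoeff f (int N - 1) * hsym n \<alpha> 2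
     + icoeff f (int N) * hsym n \<alpha> 3"
  by (simp add: hsym0 numeral_2_eq_2 numeral_3_eq_3 algebra_simps)



theorem theorem3p13:
  fixes \<alpha> v :: "nat \<Rightarrow> 'a::{field,finite}" and n k :: nat
  assumes "5 \<le> k" and "k \<le> n - 2" and "n - 2 \<le> CARD('a) - 2"
    and "inj_on \<alpha> {0..<n}"
    and "\<forall>i<n. v i \<noteq> 0"
  shows "self_orthogonal n (row_span k n (gen_mat k \<alpha> v)) \<longleftrightarrow>
    (\<exists>f :: 'a poly.
       (\<forall>j. int j > int n - 2 * int k \<longrightarrow> coeff f j = 0) \<and>
       (\<forall>i<n. v i ^ 2 = u_coef n \<alpha> i * poly f (\<alpha> i)) \<and>
       (let N = int n - 2 * int k in
          icoeff f (N - 1) + icoeff f N * hsym n \<alpha> 1 = 0 \<and>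
          icoeff f (N - 2) + icoeff f (N - 1) * hsym n \<alpha> 1 + icoeff f N * hsym n \<alpha> 2 = 0 \<and>
          icoeff f (N - 3) + icoeff f (N - 2) * hsym n \<alpha> 1 + icoeff f (N - 1) * hsym n \<alpha> 2
            + icoeff f N * hsym n \<alpha> 3 = 0))"
proof -
  note k5 = assms(1) and inj = assms(4) and vnz = assms(5)
  have n1: "1 \<le> n" and nk: "k + 2 \<le> n" using assms(1,2) by auto
  define w where "w i = v i ^ 2" for i
  have w0: "w 0 \<noteq> 0" using vnz n1 by (simp add: w_def)
  define Q where "Q m \<longleftrightarrow> (\<Sum>i<n. w i * \<alpha> i ^ m) = 0" for m
  have Gm: "gen_mat k \<alpha> v r i * gen_mat k \<alpha> v s i = w i * \<alpha> i ^ (gen_exp k r + gen_exp k s)" for r s i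
    by (simp add: gen_mat_def w_def power_add power2_eq_square algebra_simps)
  have SO: "self_orthogonal n (row_span k n (gen_mat k \<alpha> v)) \<longleftrightarrow>
      ((\<forall>m\<le>2*k-2. Q m) \<and> Q (2*k) \<and> Q (2*k+1) \<and> Q (2*k+2))"
    unfolding so_iff Gm Q_def[symmetric] using exps[OF k5, of Q] by simp
  have zero_poly: "False" if "\<forall>j. coeff (f::'a poly) j = 0" "\<forall>i<n. w i = u_coef n \<alpha> i * poly f (\<alpha> i)" for f
  proof -
    have "f = 0" using that(1) by (simp add: poly_eq_iff)
    then show False using that(2) n1 w0 by auto
  qed
  show ?thesis
  proof
    assume so: "self_orthogonal n (row_span k n (gen_mat k \<alpha> v))"
    then have QQ: "\<forall>m\<le>2*k-2. Q m" "Q (2*k)" "Q (2*k+1)" "Q (2*k+2)" using SO by auto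
    define g where "g = interp \<alpha> w n"
    have gc: "\<forall>j\<ge>n. coeff g j = 0" unfolding g_def using interp_coeff by blast
    have gw: "\<forall>i<n. w i = u_coef n \<alpha> i * poly g (\<alpha> i)" unfolding g_def using u_interp[OF inj] by auto
    have S: "(\<Sum>i<n. w i * \<alpha> i ^ m) = (\<Sum>j<n. coeff g j * cc \<alpha> n (j + m))" for m
    proof -
      have "(\<Sum>i<n. w i * \<alpha> i ^ m) = (\<Sum>i<n. u_coef n \<alpha> i * poly g (\<alpha> i) * \<alpha> i ^ m)"
        using gw by (intro sum.cong) auto
      then show ?thesis using wsum[OF gc, of n \<alpha> m] by simp
    qed
    have c0: "\<forall>t<n-1. cc \<alpha> n t = 0" using cc_low[OF inj n1] by auto
    have c1: "cc \<alpha> n (n-1) = 1" using cc_low[OF inj n1] by auto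
    have SS: "\<forall>d\<le>2*k-2. (\<Sum>j<n. coeff g j * cc \<alpha> n (j + d)) = 0"
      using QQ(1) unfolding Q_def S by blast
    have tr: "coeff g (n - 1 - d) = 0" if "d \<le> 2*k-2" "d < n" for d
      using tri[OF n1 c0 c1 SS] that by blast
    have gz: "\<forall>j. int j > int n - 2 * int k \<longrightarrow> coeff g j = 0"
    proof (intro allI impI)
      fix j assume j: "int j > int n - 2 * int k"
      show "coeff g j = 0"
      proof (cases "n \<le> j")
        case True then show ?thesis using gc by simp
      next
        case False
        then have "n - 1 - j \<le> 2*k-2" "n - 1 - j < n" "n - 1 - (n - 1 - j) = j" using j by auto
        then show ?thesis using tr by metis
      qed
    qed
    have n2k: "2*k \<le> n"
    proof (rule ccontr)
      assume "\<not> 2*k \<le> n"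
      then have "\<forall>j. coeff g j = 0" using gz by auto
      then show False using zero_poly gw by blast
    qed
    define N where "N = n - 2*k"
    have nN: "n = N + 2*k" and Nint: "int n - 2 * int k = int N" using n2k by (auto simp: N_def)
    have fcN: "\<forall>j>N. coeff g j = 0" using gz Nint by auto
    note cp = compute[OF inj nN _ fcN gw]
    have k1: "1 \<le> k" using k5 by simp
    have R0: "icoeff g (int N - 1) + icoeff g (int N) * hsym n \<alpha> 1 = 0"
      using cp(2)[OF k1, of 0] QQ(2) unfolding Q_def by (simp add: hsym0)
    have R1: "icoeff g (int N - 2) + icoeff g (int N - 1) * hsym n \<alpha> 1 + icoeff g (int N) * hsym n \<alpha> 2 = 0"
      using trans[OF cp(2)[OF k1, of 1] E1] QQ(3) unfolding Q_def by metis
    have R2: "icoeff g (int N - 3) + icoeff g (int N - 2) * hsym n \<alpha> 1 + icoeff g (int N - 1) * hsym n \<alpha> 2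
            + icoeff g (int N) * hsym n \<alpha> 3 = 0"
      using trans[OF cp(2)[OF k1, of 2] E2] QQ(4) unfolding Q_def by metis
    show "\<exists>f :: 'a poly.
       (\<forall>j. int j > int n - 2 * int k \<longrightarrow> coeff f j = 0) \<and>
       (\<forall>i<n. v i ^ 2 = u_coef n \<alpha> i * poly f (\<alpha> i)) \<and>
       (let N = int n - 2 * int k in
          icoeff f (N - 1) + icoeff f N * hsym n \<alpha> 1 = 0 \<and>
          icoeff f (N - 2) + icoeff f (N - 1) * hsym n \<alpha> 1 + icoeff f N * hsym n \<alpha> 2 = 0 \<and>
          icoeff f (N - 3) + icoeff f (N - 2) * hsym n \<alpha> 1 + icoeff f (N - 1) * hsym n \<alpha> 2
            + icoeff f N * hsym n \<alpha> 3 = 0)"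
      by (rule exI[of _ g]) (use gz gw R0 R1 R2 Nint in \<open>simp add: w_def Let_def\<close>)
  next
    assume "\<exists>f :: 'a poly.
       (\<forall>j. int j > int n - 2 * int k \<longrightarrow> coeff f j = 0) \<and>
       (\<forall>i<n. v i ^ 2 = u_coef n \<alpha> i * poly f (\<alpha> i)) \<and>
       (let N = int n - 2 * int k in
          icoeff f (N - 1) + icoeff f N * hsym n \<alpha> 1 = 0 \<and>
          icoeff f (N - 2) + icoeff f (N - 1) * hsym n \<alpha> 1 + icoeff f N * hsym n \<alpha> 2 = 0 \<and>
          icoeff f (N - 3) + icoeff f (N - 2) * hsym n \<alpha> 1 + icoeff f (N - 1) * hsym n \<alpha> 2
            + icoeff f N * hsym n \<alpha> 3 = 0)"
    then obtain f :: "'a poly" where fz: "\<forall>j. int j > int n - 2 * int k \<longrightarrow> coeff f j = 0"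
      and fw0: "\<forall>i<n. v i ^ 2 = u_coef n \<alpha> i * poly f (\<alpha> i)"
      and L: "let N = int n - 2 * int k in
          icoeff f (N - 1) + icoeff f N * hsym n \<alpha> 1 = 0 \<and>
          icoeff f (N - 2) + icoeff f (N - 1) * hsym n \<alpha> 1 + icoeff f N * hsym n \<alpha> 2 = 0 \<and>
          icoeff f (N - 3) + icoeff f (N - 2) * hsym n \<alpha> 1 + icoeff f (N - 1) * hsym n \<alpha> 2
            + icoeff f N * hsym n \<alpha> 3 = 0" by blast
    have fw: "\<forall>i<n. w i = u_coef n \<alpha> i * poly f (\<alpha> i)" using fw0 by (simp add: w_def)
    have n2k: "2*k \<le> n"
    proof (rule ccontr)
      assume "\<not> 2*k \<le> n"
      then have "\<forall>j. coeff f j = 0" using fz by auto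
      then show False using zero_poly fw by blast
    qed
    define N where "N = n - 2*k"
    have nN: "n = N + 2*k" and Nint: "int n - 2 * int k = int N" using n2k by (auto simp: N_def)
    have fcN: "\<forall>j>N. coeff f j = 0" using fz Nint by auto
    note cp = compute[OF inj nN _ fcN fw]
    have k1: "1 \<le> k" using k5 by simp
    have L': "icoeff f (int N - 1) + icoeff f (int N) * hsym n \<alpha> 1 = 0"
      "icoeff f (int N - 2) + icoeff f (int N - 1) * hsym n \<alpha> 1 + icoeff f (int N) * hsym n \<alpha> 2 = 0"
      "icoeff f (int N - 3) + icoeff f (int N - 2) * hsym n \<alpha> 1 + icoeff f (int N - 1) * hsym n \<alpha> 2
            + icoeff f (int N) * hsym n \<alpha> 3 = 0"
      using L Nint by (simp_all add: Let_def)
    have "\<forall>m\<le>2*k-2. Q m" using cp(1)[OF k1] unfolding Q_def by blast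
    moreover have "Q (2*k)" using cp(2)[OF k1, of 0] L'(1) unfolding Q_def by (simp add: hsym0)
    moreover have "Q (2*k+1)" using trans[OF cp(2)[OF k1, of 1] E1] L'(2) unfolding Q_def by metis
    moreover have "Q (2*k+2)" using trans[OF cp(2)[OF k1, of 2] E2] L'(3) unfolding Q_def by metis
    ultimately show "self_orthogonal n (row_span k n (gen_mat k \<alpha> v))" using SO by blast
  qed
qed

end
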